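(* (a) For every $n\ge0$, all roots of $K_n$ are real and lie in $(0,4)$. (b) For every $n\ge3$, all roots of $\mathcal{K}_n$ are real and lie in $[0,4)$; $0$ is a root of multiplicity exactly $\lfloor (n+1)/2\rfloor$, and the remaining $\lfloor n/2\rfloor$ roots are nonzero and simple.
   Context: $K_n(\lambda)$ is defined by $K_0=2$, $K_1=1$, $K_2=\lambda-2$, $K_3=\lambda-3$, $K_{2p+1}=(\lambda-2)K_{2p-1}-K_{2p-3}$, $K_{2p}=(\lambda-2)K_{2p-2}-K_{2p-4}$ ($p\ge2$). $\mathcal{K}_n(\lambda)=\det(\lambda I_n-M_n)$ where $M_n$ is the $n\times n$ matrix with $(M_n)_{j,i}=1$ if $i\ge j-1$ or $(j,i)=(n,n-2)$, and $0$ otherwise. *)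

theory Defs
  imports Complex_Main "Jordan_Normal_Form.Char_Poly"
begin

text \<open>K_0 = 2, K_1 = 1, K_2 = lambda - 2, K_3 = lambda - 3,
  K_m = (lambda - 2) K_(m-2) - K_(m-4) for m >= 4
  (this is exactly the two recurrences for K_(2p+1), K_(2p), p >= 2).\<close>
fun Kpoly :: "nat \<Rightarrow> real poly" where
  "Kpoly 0 = [:2:]"
| "Kpoly (Suc 0) = [:1:]"
| "Kpoly (Suc (Suc 0)) = [:-2, 1:]"
| "Kpoly (Suc (Suc (Suc 0))) = [:-3, 1:]"
| "Kpoly (Suc (Suc (Suc (Suc n)))) = [:-2, 1:] * Kpoly (Suc (Suc n)) - Kpoly n"

text \<open>The n x n matrix M_n, with 0-based indices: the paper's entry (j,i)
  (1-based) is entry (j-1,i-1) here. (M_n)_{j,i} = 1 iff i >= j-1 or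
  (j,i) = (n,n-2); in 0-based indices: i+1 >= j or (j,i) = (n-1,n-3).\<close>
definition Mmat :: "nat \<Rightarrow> real mat" where
  "Mmat n = mat n n (\<lambda>(j, i). if j \<le> i + 1 \<or> (j = n - 1 \<and> i = n - 3) then 1 else 0)"

definition calKpoly :: "nat \<Rightarrow> real poly" where
  "calKpoly n = char_poly (Mmat n)"

end

theory Submission
  imports Defs
begin

lemma Kpoly_deg: "degree (Kpoly n) = n div 2 \<and> (n \<ge> 1 \<longrightarrow> lead_coeff (Kpoly n) = 1)"
proof (induction n rule: Kpoly.induct)
  case (5 n)
  let ?q = "Kpoly (Suc (Suc n))"
  let ?p = "[:-2,1:] * ?q"
  have one: "1 \<le> Suc (Suc n)" by simp
  have l: "lead_coeff ?q = 1" using 5(1) one by blast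
  have q0: "?q \<noteq> 0" using l by (metis coeff_0 zero_neq_one)
  have dp: "degree ?p = Suc (Suc n) div 2 + 1"
    using degree_mult_eq[of "[:-2,1:]" ?q] q0 5(1) by simp
  have lp: "lead_coeff ?p = 1" unfolding lead_coeff_mult using l by simp
  have lt: "degree (Kpoly n) < degree ?p" using dp 5(2) by simp
  have d: "degree (?p - Kpoly n) = degree ?p"
    using degree_add_eq_left[of "- Kpoly n" ?p] lt by simp
  have c: "coeff (Kpoly n) (degree ?p) = 0" using lt coeff_eq_0 by blast
  show ?case using d dp lp c by simp
qed auto

lemma Kpoly_trig: "poly (Kpoly n) (4 * cos t ^ 2) * (if even n then 1 else 2 * cos t) = 2 * cos (real n * t)"
proof (induction n rule: Kpoly.induct)
  case 3
  show ?case using cos_double_cos[of t] by simp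
next
  case 4
  have e: "Kpoly (Suc (Suc (Suc 0))) = [:-3,1:]" by simp
  show ?case unfolding e using cos_treble_cos[of t] by (simp add: numeral_3_eq_3[symmetric] algebra_simps power2_eq_square power3_eq_cube)
next
  case (5 n)
  let ?w = "(if even n then 1 else 2 * cos t)"
  have a: "cos (real (Suc (Suc (Suc (Suc n)))) * t) = cos (real (Suc (Suc n)) * t + 2 * t)"
    by (simp add: algebra_simps)
  have b: "cos (real n * t) = cos (real (Suc (Suc n)) * t - 2 * t)"
    by (simp add: algebra_simps)
  have "poly (Kpoly (Suc (Suc (Suc (Suc n))))) (4 * cos t ^ 2) * ?w
     = (4 * cos t ^ 2 - 2) * (poly (Kpoly (Suc (Suc n))) (4 * cos t ^ 2) * ?w)
        - poly (Kpoly n) (4 * cos t ^ 2) * ?w" by (simp add: algebra_simps)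
  also have "\<dots> = 2 * cos (2*t) * (2 * cos (real (Suc (Suc n)) * t)) - 2 * cos (real n * t)"
    using 5 cos_double_cos[of t] by simp
  also have "\<dots> = 2 * cos (real (Suc (Suc (Suc (Suc n)))) * t)"
    unfolding a b cos_add cos_diff by (simp add: algebra_simps)
  finally show ?case by simp
qed auto

lemma Kpoly_mixed: "poly (Kpoly (2*p+2)) x = x * poly (Kpoly (2*p+1)) x - poly (Kpoly (2*p)) x
  \<and> poly (Kpoly (2*p+3)) x = poly (Kpoly (2*p+2)) x - poly (Kpoly (2*p+1)) x"
proof (induction p)
  case 0
  show ?case by (simp add: numeral_3_eq_3 numeral_2_eq_2)
next
  case (Suc p)
  let ?a = "poly (Kpoly (2*p)) x" and ?b = "poly (Kpoly (2*p+1)) x"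
  let ?c = "poly (Kpoly (2*p+2)) x" and ?d = "poly (Kpoly (2*p+3)) x"
  have h1: "?c = x * ?b - ?a" and h2: "?d = ?c - ?b" using Suc by auto
  have k4: "Kpoly (Suc(Suc(Suc(Suc (2*p))))) = [:-2,1:] * Kpoly (Suc (Suc (2*p))) - Kpoly (2*p)"
    by simp
  have k5: "Kpoly (Suc(Suc(Suc(Suc (2*p+1))))) = [:-2,1:] * Kpoly (Suc (Suc (2*p+1))) - Kpoly (2*p+1)"
    by simp
  have i: "Suc(Suc(Suc(Suc (2*p)))) = 2 * Suc p + 2" "Suc (Suc (2*p)) = 2*p+2"
     "Suc(Suc(Suc(Suc (2*p+1)))) = 2 * Suc p + 3" "Suc (Suc (2*p+1)) = 2*p+3"
     "2 * Suc p + 1 = 2*p+3" "2 * Suc p = 2*p+2" by simp_all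
  have e: "poly (Kpoly (2 * Suc p + 2)) x = (x - 2) * ?c - ?a"
    using arg_cong[OF k4, of "\<lambda>q. poly q x"] unfolding i by (simp add: algebra_simps)
  have f: "poly (Kpoly (2 * Suc p + 3)) x = (x - 2) * ?d - ?b"
    using arg_cong[OF k5, of "\<lambda>q. poly q x"] unfolding i by (simp add: algebra_simps)
  have g1: "(x - 2) * ?c - ?a = x * ?d - ?c" unfolding h2 h1 by (simp add: algebra_simps)
  have g2: "(x - 2) * ?d - ?b = ((x - 2) * ?c - ?a) - ?d" unfolding h2 h1 by (simp add: algebra_simps)
  have i7: "2*p+2+1 = 2*p+3" by simp
  show ?case unfolding e f unfolding i(5,6) i7 using g1 g2 by blast
qed

definition Gm :: "real \<Rightarrow> nat \<Rightarrow> real \<Rightarrow> real mat" where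
  "Gm x m c = mat m m (\<lambda>(j,i). if j = 0 \<and> i = 0 then c else
      (if j = i then x else 0) - (if j \<le> i+1 \<or> (j = m-1 \<and> i = m-3) then 1 else 0))"

lemma Gm_carrier: "Gm x m c \<in> carrier_mat m m" by (simp add: Gm_def)

lemma Gm_del00: "mat_delete (Gm x (Suc m) c) 0 0 = Gm x m (x - 1)"
  by (rule eq_matI) (auto simp: Gm_def mat_delete_def)

lemma Gm_del10: "m \<ge> 1 \<Longrightarrow> mat_delete (Gm x (Suc m) c) 1 0 = Gm x m (- 1)"
  by (rule eq_matI) (auto simp: Gm_def mat_delete_def)

lemma det_2x2: assumes A: "A \<in> carrier_mat 2 2"
  shows "det A = A $$ (0,0) * A $$ (1,1) - A $$ (1,0) * A $$ (0,1)"
proof -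
  have "det A = (\<Sum>i<2. A $$ (i,0) * cofactor A i 0)"
    by (rule laplace_expansion_column[OF A]) simp
  also have "\<dots> = A $$ (0,0) * cofactor A 0 0 + A $$ (1,0) * cofactor A 1 0"
    by (simp add: numeral_2_eq_2)
  also have "cofactor A 0 0 = A $$ (1,1)"
    unfolding cofactor_def using A
    by (subst det_single) (auto simp: mat_delete_def intro!: mat_delete_carrier)
  also have "cofactor A 1 0 = - A $$ (0,1)"
    unfolding cofactor_def using A
    by (subst det_single) (auto simp: mat_delete_def intro!: mat_delete_carrier)
  finally show ?thesis by simp
qed

lemma Gm_rec: assumes m: "m \<ge> 1" "m \<noteq> 2"
  shows "det (Gm x (Suc m) c) = c * det (Gm x m (x - 1)) + det (Gm x m (- 1))"
proof -
  obtain m' where m': "m = Suc m'" using m by (cases m) auto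
  let ?G = "Gm x (Suc m) c"
  let ?f = "\<lambda>i. ?G $$ (i,0) * cofactor ?G i 0"
  have "det ?G = (\<Sum>i<Suc m. ?f i)"
    by (rule laplace_expansion_column[OF Gm_carrier]) simp
  also have "\<dots> = ?f 0 + ?f 1 + (\<Sum>i<m'. ?f (Suc (Suc i)))"
    unfolding m' sum.lessThan_Suc_shift by simp
  also have "(\<Sum>i<m'. ?f (Suc (Suc i))) = 0"
  proof (rule sum.neutral, intro ballI)
    fix i assume "i \<in> {..<m'}"
    hence "Suc (Suc i) < Suc m" using m' by simp
    moreover have "\<not> (Suc (Suc i) = Suc m - 1 \<and> 0 = Suc m - 3)" using m by auto
    ultimately have "?G $$ (Suc (Suc i), 0) = 0" unfolding Gm_def by auto
    thus "?f (Suc (Suc i)) = 0" by simp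
  qed
  also have "?f 0 = c * det (Gm x m (x - 1))"
    unfolding cofactor_def Gm_del00 by (simp add: Gm_def)
  also have "?f 1 = det (Gm x m (- 1))"
    unfolding cofactor_def Gm_del10[OF m(1)] using m by (simp add: Gm_def)
  finally show ?thesis by simp
qed

lemma Gm1: "det (Gm x 1 c) = c"
  by (subst det_single) (auto simp: Gm_def intro: Gm_carrier)

lemma Gm2: "det (Gm x 2 c) = c * (x - 1) - 1"
  using Gm_rec[of 1 x c] Gm1[unfolded One_nat_def] by (simp add: numeral_2_eq_2)

lemma Gm3: "det (Gm x 3 c) = c * (x^2 - 2*x) - 2*x"
proof -
  let ?G = "Gm x 3 c"
  let ?f = "\<lambda>i. ?G $$ (i,0) * cofactor ?G i 0"
  have "det ?G = (\<Sum>i<3. ?f i)"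
    by (rule laplace_expansion_column[OF Gm_carrier]) simp
  also have "\<dots> = ?f 0 + ?f 1 + ?f 2"
    by (simp add: numeral_3_eq_3 numeral_2_eq_2)
  also have "?f 0 = c * det (Gm x 2 (x - 1))"
    using Gm_del00[of x 2 c] unfolding cofactor_def by (simp add: Gm_def numeral_3_eq_3)
  also have "?f 1 = det (Gm x 2 (- 1))"
    using Gm_del10[of 2 x c] unfolding cofactor_def by (simp add: Gm_def numeral_3_eq_3)
  also have "?f 2 = - x"
  proof -
    have c: "mat_delete ?G 2 0 \<in> carrier_mat 2 2"
      using mat_delete_carrier[OF Gm_carrier[of x 3 c], of 2 0] by simp
    have "det (mat_delete ?G 2 0) = x"
      unfolding det_2x2[OF c] by (simp add: mat_delete_def Gm_def algebra_simps)
    thus ?thesis unfolding cofactor_def by (simp add: Gm_def)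
  qed
  finally show ?thesis unfolding Gm2 by (simp add: algebra_simps power2_eq_square)
qed

definition fK :: "real \<Rightarrow> nat \<Rightarrow> real" where
  "fK x m = x ^ ((m + 1) div 2) * poly (Kpoly m) x"

lemma fK_rec: "fK x (Suc (Suc (Suc (Suc k)))) = x * (fK x (k+3) - fK x (k+2))"
proof (cases "even k")
  case True
  then obtain q where k: "k = 2*q" by blast
  have h: "poly (Kpoly (2*Suc q+2)) x = x * poly (Kpoly (2*Suc q+1)) x - poly (Kpoly (2*Suc q)) x"
    using Kpoly_mixed[of "Suc q" x] by blast
  have idx: "Suc (Suc (Suc (Suc (2*q)))) = 2*Suc q+2" "2*q+3 = 2*Suc q+1" "2*q+2 = 2*Suc q" by simp_all
  have ex: "(2*Suc q+2+1) div 2 = Suc (Suc q)" "(2*Suc q+1+1) div 2 = Suc (Suc q)" "(2*Suc q+1) div 2 = Suc q"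
    by simp_all
  show ?thesis unfolding k fK_def idx ex h by (simp add: algebra_simps)
next
  case False
  then obtain q where k: "k = 2*q+1" using oddE by blast
  have h: "poly (Kpoly (2*Suc q+3)) x = poly (Kpoly (2*Suc q+2)) x - poly (Kpoly (2*Suc q+1)) x"
    using Kpoly_mixed[of "Suc q" x] by blast
  have idx: "Suc (Suc (Suc (Suc (2*q+1)))) = 2*Suc q+3" "2*q+1+3 = 2*Suc q+2" "2*q+1+2 = 2*Suc q+1" by simp_all
  have ex: "(2*Suc q+3+1) div 2 = Suc (Suc (Suc q))" "(2*Suc q+2+1) div 2 = Suc (Suc q)" "(2*Suc q+1+1) div 2 = Suc (Suc q)"
    by simp_all
  show ?thesis unfolding k fK_def idx ex h by (simp add: algebra_simps)
qed

lemma Gm_closed: assumes "m \<ge> 3"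
  shows "det (Gm x m (x - 1)) = fK x m \<and> det (Gm x m (- 1)) = (if m = 3 then - (x^2) else - x * fK x (m - 2))"
  using assms
proof (induction m rule: nat_induct_at_least)
  case base
  have p3: "poly (Kpoly 3) x = x - 3" by (simp add: numeral_3_eq_3)
  show ?case unfolding Gm3 fK_def p3 by (simp add: algebra_simps power2_eq_square)
next
  case (Suc n)
  have n1: "n \<ge> 1" "n \<noteq> 2" using Suc.hyps by auto
  have D: "det (Gm x (Suc n) (x - 1)) = (x - 1) * det (Gm x n (x - 1)) + det (Gm x n (- 1))"
    using Gm_rec[OF n1] .
  have E: "det (Gm x (Suc n) (- 1)) = - det (Gm x n (x - 1)) + det (Gm x n (- 1))"
    using Gm_rec[OF n1] by simp
  show ?case
  proof (cases "n = 3")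
    case True
    have k4: "Kpoly (Suc (Suc (Suc (Suc 0)))) = [:-2,1:] * Kpoly (Suc (Suc 0)) - Kpoly 0" by simp
    have p4: "poly (Kpoly 4) x = (x - 2) * (x - 2) - 2"
      using arg_cong[OF k4, of "\<lambda>p. poly p x"] by (simp add: eval_nat_numeral algebra_simps)
    have p3: "poly (Kpoly 3) x = x - 3" by (simp add: numeral_3_eq_3)
    have p2: "poly (Kpoly 2) x = x - 2" by (simp add: numeral_2_eq_2)
    have IH3: "det (Gm x 3 (x-1)) = x^2 * (x-3)" "det (Gm x 3 (-1)) = -(x^2)"
      using Suc.IH True unfolding fK_def by (simp_all add: p3)
    have f4: "fK x 4 = x^2 * ((x-2)*(x-2)-2)" unfolding fK_def p4 by simp
    have f2: "fK x 2 = x * (x-2)" unfolding fK_def p2 by simp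
    have s4: "Suc n = 4" "Suc n - 2 = 2" using True by simp_all
    have D4: "det (Gm x 4 (x-1)) = (x-1) * (x^2 * (x-3)) - x^2"
      using D unfolding s4 unfolding True IH3 by simp
    have E4: "det (Gm x 4 (-1)) = - (x^2 * (x-3)) - x^2"
      using E unfolding s4 unfolding True IH3 by simp
    show ?thesis unfolding s4 D4 E4 f4 by (simp add: f2 algebra_simps power2_eq_square)
  next
    case False
    then obtain k where k: "n = Suc (Suc (Suc (Suc k)))" using Suc.hyps
      by (metis Suc_le_D eq_numeral_Suc le_antisym not_less_eq_eq numeral_3_eq_3 pred_numeral_simps(3))
    have A: "fK x n = x * (fK x (k+3) - fK x (k+2))" unfolding k by (rule fK_rec)
    have i': "Suc k + 3 = Suc (Suc (Suc (Suc k)))" "Suc k + 2 = k + 3" by simp_all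
    have B: "fK x (Suc n) = x * (fK x n - fK x (k+3))" unfolding k by (rule fK_rec[of x "Suc k", unfolded i'])
    have IH: "det (Gm x n (x - 1)) = fK x n" "det (Gm x n (- 1)) = - x * fK x (k+2)"
      using Suc.IH False k by auto
    have sn: "Suc n - 2 = k + 3" "Suc n \<noteq> 3" using k by simp_all
    have D': "det (Gm x (Suc n) (x-1)) = (x-1) * fK x n - x * fK x (k+2)" using D IH by simp
    have E': "det (Gm x (Suc n) (-1)) = - fK x n - x * fK x (k+2)" using E IH by simp
    have g1: "(x-1) * fK x n - x * fK x (k+2) = fK x (Suc n)"
      unfolding B using A by (simp add: algebra_simps)
    have g2: "- fK x n - x * fK x (k+2) = - x * fK x (k+3)"
      using A by (simp add: algebra_simps)
    show ?thesis unfolding if_not_P[OF sn(2)] sn(1) D' E' g1 g2 by simp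
  qed
qed

lemma Mmat_carrier: "Mmat n \<in> carrier_mat n n" by (simp add: Mmat_def)

lemma charmat_Gm: "- char_matrix (Mmat n) x = Gm x n (x - 1)"
  by (rule eq_matI) (auto simp: Mmat_def Gm_def char_matrix_def)

lemma calK_eq: assumes "n \<ge> 3"
  shows "calKpoly n = [:0,1:] ^ ((n + 1) div 2) * Kpoly n"
proof -
  have "poly (calKpoly n) = poly ([:0,1:] ^ ((n + 1) div 2) * Kpoly n)"
  proof
    fix x
    have "poly (calKpoly n) x = det (Gm x n (x - 1))"
      unfolding calKpoly_def char_poly_matrix[OF Mmat_carrier] charmat_Gm ..
    also have "\<dots> = fK x n" using Gm_closed[OF assms] by blast
    finally show "poly (calKpoly n) x = poly ([:0,1:] ^ ((n + 1) div 2) * Kpoly n) x"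
      by (simp add: fK_def)
  qed
  thus ?thesis using poly_eq_poly_eq_iff by blast
qed

lemma prod_lin_props: "degree (\<Prod>r\<leftarrow>rs. [:-r,1:] :: 'a::idom poly) = length rs
   \<and> lead_coeff (\<Prod>r\<leftarrow>rs. [:-r,1:] :: 'a::idom poly) = 1"
proof (induction rs)
  case (Cons a rs)
  let ?P = "\<Prod>r\<leftarrow>rs. [:-r,1:] :: 'a poly"
  have e: "(\<Prod>r\<leftarrow>a#rs. [:-r,1:]) = [:-a,1:] * ?P" by (simp only: list.map prod_list.Cons)
  have dP: "degree ?P = length rs" and lP: "lead_coeff ?P = 1" using Cons.IH by (rule conjunct1, rule conjunct2)
  have P0: "?P \<noteq> 0" using lP by (metis leading_coeff_0_iff zero_neq_one)
  have d: "degree ([:-a,1:] * ?P) = length (a#rs)"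
    by (subst degree_mult_eq) (use P0 dP in auto)
  have "lead_coeff ([:-a,1:] * ?P) = lead_coeff [:-a,1:] * lead_coeff ?P" by (rule lead_coeff_mult)
  also have "\<dots> = 1" by (simp add: lP)
  finally show ?case unfolding e using d by blast
qed simp

lemma poly_prod_lin_zero: "poly (\<Prod>r\<leftarrow>rs. [:-r,1:] :: 'a::idom poly) z = 0 \<longleftrightarrow> z \<in> set rs"
  by (induction rs) auto

lemma prod_lin_ne0: "(\<Prod>r\<leftarrow>rs. [:-r,1:] :: 'a::idom poly) \<noteq> 0"
  using prod_lin_props[of rs] by (metis leading_coeff_0_iff zero_neq_one)

lemma prod_lin_dvd: fixes p :: "'a::idom poly"
  assumes "distinct rs" "\<forall>r\<in>set rs. poly p r = 0"
  shows "(\<Prod>r\<leftarrow>rs. [:-r,1:]) dvd p"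
  using assms
proof (induction rs arbitrary: p)
  case (Cons a rs)
  have "poly p a = 0" using Cons.prems by simp
  then obtain q where q: "p = [:-a,1:] * q" using poly_eq_0_iff_dvd by (metis dvdE)
  have "\<forall>r\<in>set rs. poly q r = 0"
  proof
    fix r assume r: "r \<in> set rs"
    hence "r \<noteq> a" using Cons.prems by auto
    moreover have "poly p r = 0" using Cons.prems r by simp
    ultimately show "poly q r = 0" using q by simp
  qed
  hence h: "(\<Prod>r\<leftarrow>rs. [:-r,1:]) dvd q" using Cons by simp
  have e: "(\<Prod>r\<leftarrow>a#rs. [:-r,1:]) = [:-a,1:] * (\<Prod>r\<leftarrow>rs. [:-r,1:])"
    by (simp only: list.map prod_list.Cons)
  show ?case unfolding e q using h by (rule mult_dvd_mono[OF dvd_refl])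
qed simp

lemma monic_factor: fixes p :: "'a::idom poly"
  assumes d: "distinct rs" and r: "\<forall>r\<in>set rs. poly p r = 0"
    and deg: "degree p = length rs" and l: "lead_coeff p = 1"
  shows "p = (\<Prod>r\<leftarrow>rs. [:-r,1:])"
proof -
  let ?P = "\<Prod>r\<leftarrow>rs. [:-r,1:] :: 'a poly"
  obtain q where q: "p = ?P * q" using prod_lin_dvd[OF d r] by (metis dvdE)
  have p0: "p \<noteq> 0" using l by (metis leading_coeff_0_iff zero_neq_one)
  hence q0: "q \<noteq> 0" using q by auto
  have P0: "?P \<noteq> 0" by (rule prod_lin_ne0)
  have dP: "degree ?P = length rs" and lP: "lead_coeff ?P = 1" using prod_lin_props[of rs] by (rule conjunct1, rule conjunct2)
  have "degree p = length rs + degree q" using q degree_mult_eq[OF P0 q0] dP by simp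
  hence dq: "degree q = 0" using deg by simp
  have "lead_coeff p = lead_coeff ?P * lead_coeff q" unfolding q by (rule lead_coeff_mult)
  hence "lead_coeff q = 1" using l lP by simp
  hence "q = 1" using dq degree_0_id[OF dq] by (metis one_pCons)
  thus ?thesis using q by simp
qed

lemma order_lin: "order z [:-a,1:] = (if z = a then 1 else (0::nat))"
proof (cases "z = a")
  case True thus ?thesis using order_power_n_n[of a 1] by simp
next
  case False
  hence "poly [:-a,1:] z \<noteq> 0" by simp
  hence "order z [:-a,1:] = 0" by (rule order_0I)
  thus ?thesis using False by simp
qed

lemma order_prod_lin: fixes z :: "'a::idom"
  assumes "distinct rs" shows "order z (\<Prod>r\<leftarrow>rs. [:-r,1:]) = (if z \<in> set rs then 1 else 0)"
  using assms
proof (induction rs)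
  case (Cons a rs)
  let ?P = "\<Prod>r\<leftarrow>rs. [:-r,1:] :: 'a poly"
  have P0: "?P \<noteq> 0" by (rule prod_lin_ne0)
  have l0: "[:-a,1:] \<noteq> (0 :: 'a poly)" by simp
  have "[:-a,1:] * ?P \<noteq> 0" using P0 l0 no_zero_divisors by blast
  hence o: "order z ([:-a,1:] * ?P) = order z [:-a,1:] + order z ?P" by (rule order_mult)
  have e: "(\<Prod>r\<leftarrow>a#rs. [:-r,1:]) = [:-a,1:] * ?P" by (simp only: list.map prod_list.Cons)
  show ?case unfolding e o order_lin using Cons by auto
qed simp

definition th :: "nat \<Rightarrow> nat \<Rightarrow> real" where
  "th n k = pi * real (2*k+1) / real (2*n)"

definition lam :: "nat \<Rightarrow> nat \<Rightarrow> real" where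
  "lam n k = 4 * cos (th n k) ^ 2"

lemma th_bounds: assumes "k < n div 2" shows "0 < th n k" "th n k < pi/2"
proof -
  have n: "real n > 0" using assms by simp
  have kn: "real (2*k+1) < real n" using assms by linarith
  show "0 < th n k" unfolding th_def using n by simp
  have "pi * real (2*k+1) < pi * real n" using kn pi_gt_zero by simp
  thus "th n k < pi/2" unfolding th_def using n by (simp add: field_simps)
qed

lemma cos_th_bounds: assumes "k < n div 2" shows "0 < cos (th n k)" "cos (th n k) < 1"
proof -
  show "0 < cos (th n k)" using th_bounds[OF assms] by (intro cos_gt_zero_pi) auto
  have "cos (th n k) < cos 0"
    using th_bounds[OF assms] by (subst cos_mono_less_eq) auto
  thus "cos (th n k) < 1" by simp
qed

lemma lam_bounds: assumes "k < n div 2" shows "0 < lam n k" "lam n k < 4"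
proof -
  have c: "0 < cos (th n k)" "cos (th n k) < 1" using cos_th_bounds[OF assms] by auto
  show "0 < lam n k" unfolding lam_def using c by simp
  have "cos (th n k) ^ 2 < 1" using c by (simp add: power_less_one_iff abs_less_iff) 
  thus "lam n k < 4" unfolding lam_def by simp
qed

lemma lam_root: assumes "k < n div 2" shows "poly (Kpoly n) (lam n k) = 0"
proof -
  have n: "real n > 0" using assms by simp
  have c: "0 < cos (th n k)" using cos_th_bounds[OF assms] by auto
  have "real n * th n k = real_of_int (int k) * pi + pi/2"
    unfolding th_def using n by (simp add: field_simps)
  hence cz: "cos (real n * th n k) = 0" using cos_zero_iff_int2 by blast
  have "poly (Kpoly n) (lam n k) * (if even n then 1 else 2 * cos (th n k)) = 0"
    using Kpoly_trig[of n "th n k"] cz unfolding lam_def by simp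
  moreover have "(if even n then 1 else 2 * cos (th n k)) \<noteq> 0" using c by simp
  ultimately show ?thesis by simp
qed

lemma lam_inj: assumes "k1 < n div 2" "k2 < n div 2" "lam n k1 = lam n k2" shows "k1 = k2"
proof -
  have n: "real n > 0" using assms by simp
  have c1: "0 < cos (th n k1)" and c2: "0 < cos (th n k2)" using cos_th_bounds assms by auto
  have "cos (th n k1) ^ 2 = cos (th n k2) ^ 2" using assms(3) unfolding lam_def by simp
  hence "cos (th n k1) = cos (th n k2)" using c1 c2 by (simp add: power2_eq_iff_nonneg)
  moreover have "0 \<le> th n k1" "th n k1 \<le> pi" "0 \<le> th n k2" "th n k2 \<le> pi"
    using th_bounds[OF assms(1)] th_bounds[OF assms(2)] pi_gt_zero by linarith+
  ultimately have "th n k1 = th n k2" using cos_inj_pi by blast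
  hence "pi * real (2*k1+1) / real (2*n) = pi * real (2*k2+1) / real (2*n)" unfolding th_def .
  hence "pi * real (2*k1+1) = pi * real (2*k2+1)" using n by (simp only: divide_cancel_right) simp
  hence "real (2*k1+1) = real (2*k2+1)" using pi_gt_zero by (simp only: mult_cancel_left) simp
  thus ?thesis by simp
qed

definition rts :: "nat \<Rightarrow> complex list" where
  "rts n = map (\<lambda>k. complex_of_real (lam n k)) [0..<n div 2]"

lemma rts_distinct: "distinct (rts n)"
  unfolding rts_def distinct_map by (auto simp: inj_on_def dest: lam_inj)

lemma rts_set: "z \<in> set (rts n) \<longleftrightarrow> (\<exists>k < n div 2. z = complex_of_real (lam n k))"
  unfolding rts_def by auto

interpretation rp: map_poly_inj_idom_hom "complex_of_real" ..

lemma K_factor: assumes "n \<ge> 1"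
  shows "map_poly complex_of_real (Kpoly n) = (\<Prod>r\<leftarrow>rts n. [:-r,1:])"
proof (rule monic_factor[OF rts_distinct])
  show "\<forall>r\<in>set (rts n). poly (map_poly complex_of_real (Kpoly n)) r = 0"
  proof
    fix r assume "r \<in> set (rts n)"
    then obtain k where "k < n div 2" "r = complex_of_real (lam n k)" unfolding rts_set by blast
    thus "poly (map_poly complex_of_real (Kpoly n)) r = 0" by (simp add: lam_root)
  qed
  show "degree (map_poly complex_of_real (Kpoly n)) = length (rts n)"
    using Kpoly_deg[of n] by (simp add: rts_def)
  show "lead_coeff (map_poly complex_of_real (Kpoly n)) = 1"
  proof -
    have l: "lead_coeff (Kpoly n) = 1" using Kpoly_deg[of n] assms by blast
    show ?thesis by (simp add: l)
  qed
qed

lemma partA: "poly (map_poly complex_of_real (Kpoly n)) z = 0 \<Longrightarrow> z \<in> \<real> \<and> 0 < Re z \<and> Re z < 4"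
proof (cases "n = 0")
  case True
  assume "poly (map_poly complex_of_real (Kpoly n)) z = 0"
  thus ?thesis using True by simp
next
  case False
  assume "poly (map_poly complex_of_real (Kpoly n)) z = 0"
  moreover have "map_poly complex_of_real (Kpoly n) = (\<Prod>r\<leftarrow>rts n. [:-r,1:])"
    using K_factor False by simp
  ultimately have "z \<in> set (rts n)" using poly_prod_lin_zero by metis
  then obtain k where k: "k < n div 2" "z = complex_of_real (lam n k)" unfolding rts_set by blast
  thus ?thesis using lam_bounds[OF k(1)] by simp
qed

lemma rts_nz: "z \<in> set (rts n) \<Longrightarrow> z \<noteq> 0"
  unfolding rts_set using lam_bounds by fastforce

theorem theorem3:
  shows "(\<forall>n. \<forall>z::complex. poly (map_poly complex_of_real (Kpoly n)) z = 0 \<longrightarrow>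
            z \<in> \<real> \<and> 0 < Re z \<and> Re z < 4)
       \<and> (\<forall>n\<ge>3.
            (\<forall>z::complex. poly (map_poly complex_of_real (calKpoly n)) z = 0 \<longrightarrow>
               z \<in> \<real> \<and> 0 \<le> Re z \<and> Re z < 4)
          \<and> order 0 (map_poly complex_of_real (calKpoly n)) = (n + 1) div 2
          \<and> card {z::complex. z \<noteq> 0 \<and> poly (map_poly complex_of_real (calKpoly n)) z = 0} = n div 2
          \<and> (\<forall>z::complex. z \<noteq> 0 \<and> poly (map_poly complex_of_real (calKpoly n)) z = 0 \<longrightarrow>
               order z (map_poly complex_of_real (calKpoly n)) = 1))"
proof (rule conjI)
  show "\<forall>n. \<forall>z::complex. poly (map_poly complex_of_real (Kpoly n)) z = 0 \<longrightarrow>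
            z \<in> \<real> \<and> 0 < Re z \<and> Re z < 4" using partA by blast
next
 show "\<forall>n\<ge>3.
            (\<forall>z::complex. poly (map_poly complex_of_real (calKpoly n)) z = 0 \<longrightarrow>
               z \<in> \<real> \<and> 0 \<le> Re z \<and> Re z < 4)
          \<and> order 0 (map_poly complex_of_real (calKpoly n)) = (n + 1) div 2
          \<and> card {z::complex. z \<noteq> 0 \<and> poly (map_poly complex_of_real (calKpoly n)) z = 0} = n div 2
          \<and> (\<forall>z::complex. z \<noteq> 0 \<and> poly (map_poly complex_of_real (calKpoly n)) z = 0 \<longrightarrow>
               order z (map_poly complex_of_real (calKpoly n)) = 1)"
 proof (intro allI impI)
  fix n :: nat assume n: "n \<ge> 3"
  let ?e = "(n + 1) div 2"
  let ?P = "\<Prod>r\<leftarrow>rts n. [:-r,1:]"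
  have C: "map_poly complex_of_real (calKpoly n) = [:0,1:] ^ ?e * ?P"
  proof -
    have "map_poly complex_of_real (Kpoly n) = ?P" using K_factor n by simp
    thus ?thesis unfolding calK_eq[OF n] rp.hom_mult by (simp add: rp.hom_power)
  qed
  have P0: "?P \<noteq> 0" by (rule prod_lin_ne0)
  have X0: "[:0,1:] ^ ?e \<noteq> (0 :: complex poly)" by simp
  have C0: "[:0,1:] ^ ?e * ?P \<noteq> 0" using P0 X0 no_zero_divisors by blast
  have roots: "poly (map_poly complex_of_real (calKpoly n)) z = 0 \<longleftrightarrow> z = 0 \<or> z \<in> set (rts n)" for z
  proof -
    have "poly (map_poly complex_of_real (calKpoly n)) z = z ^ ?e * poly ?P z"
      unfolding C by simp
    moreover have "0 < Suc n div 2" using n by simp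
    ultimately show ?thesis using poly_prod_lin_zero[of "rts n" z] by auto
  qed
  have G1: "\<forall>z. poly (map_poly complex_of_real (calKpoly n)) z = 0 \<longrightarrow> z \<in> \<real> \<and> 0 \<le> Re z \<and> Re z < 4"
  proof (intro allI impI)
    fix z assume "poly (map_poly complex_of_real (calKpoly n)) z = 0"
    hence "z = 0 \<or> z \<in> set (rts n)" using roots by blast
    thus "z \<in> \<real> \<and> 0 \<le> Re z \<and> Re z < 4"
    proof
      assume "z \<in> set (rts n)"
      moreover have "map_poly complex_of_real (Kpoly n) = (\<Prod>r\<leftarrow>rts n. [:-r,1:])"
        using K_factor n by simp
      ultimately have "poly (map_poly complex_of_real (Kpoly n)) z = 0"
        using poly_prod_lin_zero by metis
      thus ?thesis using partA by force
    qed simp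
  qed
  have oX: "order z ([:0,1:] ^ ?e) = (if z = 0 then ?e else 0)" for z :: complex
  proof (cases "z = 0")
    case True thus ?thesis using order_power_n_n[of 0 ?e] by simp
  next
    case False
    hence "poly ([:0,1:] ^ ?e) z \<noteq> 0" by simp
    hence "order z ([:0,1:] ^ ?e) = 0" by (rule order_0I)
    thus ?thesis using False by simp
  qed
  have oC: "order z (map_poly complex_of_real (calKpoly n)) = order z ([:0,1:] ^ ?e) + order z ?P" for z
    unfolding C using C0 by (rule order_mult)
  have G2: "order 0 (map_poly complex_of_real (calKpoly n)) = ?e"
    unfolding oC oX order_prod_lin[OF rts_distinct] using rts_nz by auto
  have S: "{z::complex. z \<noteq> 0 \<and> poly (map_poly complex_of_real (calKpoly n)) z = 0} = set (rts n)"
    using roots rts_nz by blast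
  have G3: "card {z::complex. z \<noteq> 0 \<and> poly (map_poly complex_of_real (calKpoly n)) z = 0} = n div 2"
    unfolding S distinct_card[OF rts_distinct] by (simp add: rts_def)
  have G4: "\<forall>z::complex. z \<noteq> 0 \<and> poly (map_poly complex_of_real (calKpoly n)) z = 0 \<longrightarrow>
               order z (map_poly complex_of_real (calKpoly n)) = 1"
  proof (intro allI impI)
    fix z :: complex assume z: "z \<noteq> 0 \<and> poly (map_poly complex_of_real (calKpoly n)) z = 0"
    hence "z \<in> set (rts n)" using roots by blast
    thus "order z (map_poly complex_of_real (calKpoly n)) = 1"
      unfolding oC oX order_prod_lin[OF rts_distinct] using z by simp
  qed
  show "(\<forall>z::complex. poly (map_poly complex_of_real (calKpoly n)) z = 0 \<longrightarrow>
               z \<in> \<real> \<and> 0 \<le> Re z \<and> Re z < 4)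
          \<and> order 0 (map_poly complex_of_real (calKpoly n)) = (n + 1) div 2
          \<and> card {z::complex. z \<noteq> 0 \<and> poly (map_poly complex_of_real (calKpoly n)) z = 0} = n div 2
          \<and> (\<forall>z::complex. z \<noteq> 0 \<and> poly (map_poly complex_of_real (calKpoly n)) z = 0 \<longrightarrow>
               order z (map_poly complex_of_real (calKpoly n)) = 1)"
    using G1 G2 G3 G4 by blast
 qed
qed

end
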